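(* Let $\mu\in(0,1)$, $\sigma>1$ with $\frac{1}{1-\mu}<\sigma$, and let $v_n>0$, $v_m>0$, $\rho>0$. For each nonzero integer $k$ and $\tau>0$ put $\alpha=(\sigma-1)\tau$, \[ Z_k=\frac{\alpha^2\rho^2\left(1-(-1)^k e^{-\alpha\rho\pi}\right)}{\left(k^2+\alpha^2\rho^2\right)\left(1-e^{-\alpha\rho\pi}\right)},\qquad \overline{G}=\left[\frac{\sigma}{2\pi\rho}\cdot\frac{2\left(1-e^{-\alpha\pi\rho}\right)}{\alpha}\right]^{\frac{1}{1-\sigma}}, \] and \[ M_k(\tau)=\frac{\overline{G}^{-\mu}}{\sigma}\begin{bmatrix} v_n\mu\left(\frac{A(Z_k)}{\sigma}-1\right) & v_n\mu\left(\frac{B(Z_k)}{\sigma}+1\right)\\[2mm] v_m A(Z_k) & v_m B(Z_k)\end{bmatrix}, \] where for $Z\in[0,1]$ \[ \delta(Z)=1-\frac{\mu}{\sigma}Z-\frac{\sigma-1}{\sigma}Z^2,\quad A(Z)=\frac{1+\frac{\mu}{\sigma-1}Z-\left(1+\frac{\mu^2}{\sigma-1}\right)Z^2}{\delta(Z)},\quad B(Z)=-\frac{(\mu Z-1)^2}{\delta(Z)}. \] Let $\tau_k^*>0$ denote the critical point for frequency $k$, namely the value such that the maximal real part of the eigenvalues of $M_k(\tau)$ is positive for $\tau\in(0,\tau_k^* )$, zero at $\tau_k^*$, and negative for $\tau>\tau_k^*$. Then $\tau_k^*<\tau_{k+2}^*$ whenever $k>0$, and $\tau_k^*<\tau_{k-2}^*$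 whenever $k<0$.
   Context: $M_k(\tau)$ is the linearization matrix for the $k$-th Fourier modes of perturbations of the firm and worker share functions around the homogeneous stationary state of a core-periphery model on a circle of radius $\rho$ with firm and worker migration; $\mu$ is the manufacturing expenditure share, $\sigma$ the elasticity of substitution, $\tau$ the transport cost parameter, $v_n,v_m$ migration speeds. Under the stated hypotheses such a critical point $\tau_k^*$ exists (and is uniquely determined by the stated sign pattern) for every nonzero integer $k$. *)

theory Defs
  imports "HOL-Analysis.Analysis"
begin

definition cp_alpha :: "real \<Rightarrow> real \<Rightarrow> real" where
  "cp_alpha \<sigma> \<tau> = (\<sigma> - 1) * \<tau>"

definition cp_Z :: "real \<Rightarrow> real \<Rightarrow> int \<Rightarrow> real \<Rightarrow> real" where
  "cp_Z \<sigma> \<rho> k \<tau> =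
     (let \<alpha> = cp_alpha \<sigma> \<tau> in
       \<alpha>\<^sup>2 * \<rho>\<^sup>2 * (1 - ((-1::real) powi k) * exp (- \<alpha> * \<rho> * pi))
       / (((real_of_int k)\<^sup>2 + \<alpha>\<^sup>2 * \<rho>\<^sup>2) * (1 - exp (- \<alpha> * \<rho> * pi))))"

definition cp_Gbar :: "real \<Rightarrow> real \<Rightarrow> real \<Rightarrow> real" where
  "cp_Gbar \<sigma> \<rho> \<tau> =
     (let \<alpha> = cp_alpha \<sigma> \<tau> in
       (\<sigma> / (2 * pi * \<rho>) * (2 * (1 - exp (- \<alpha> * pi * \<rho>)) / \<alpha>)) powr (1 / (1 - \<sigma>)))"

definition cp_delta :: "real \<Rightarrow> real \<Rightarrow> real \<Rightarrow> real" where
  "cp_delta \<mu> \<sigma> Z = 1 - \<mu> / \<sigma> * Z - (\<sigma> - 1) / \<sigma> * Z\<^sup>2"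

definition cp_A :: "real \<Rightarrow> real \<Rightarrow> real \<Rightarrow> real" where
  "cp_A \<mu> \<sigma> Z = (1 + \<mu> / (\<sigma> - 1) * Z - (1 + \<mu>\<^sup>2 / (\<sigma> - 1)) * Z\<^sup>2) / cp_delta \<mu> \<sigma> Z"

definition cp_B :: "real \<Rightarrow> real \<Rightarrow> real \<Rightarrow> real" where
  "cp_B \<mu> \<sigma> Z = - ((\<mu> * Z - 1)\<^sup>2) / cp_delta \<mu> \<sigma> Z"

definition cp_M :: "real \<Rightarrow> real \<Rightarrow> real \<Rightarrow> real \<Rightarrow> real \<Rightarrow> int \<Rightarrow> real \<Rightarrow> real^2^2" where
  "cp_M \<mu> \<sigma> vn vm \<rho> k \<tau> =
     (let Z = cp_Z \<sigma> \<rho> k \<tau>; A = cp_A \<mu> \<sigma> Z; B = cp_B \<mu> \<sigma> Z;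
          c = (cp_Gbar \<sigma> \<rho> \<tau>) powr (- \<mu>) / \<sigma> in
      (\<chi> i j. c * (if i = 1 then (if j = 1 then vn * \<mu> * (A / \<sigma> - 1) else vn * \<mu> * (B / \<sigma> + 1))
                           else (if j = 1 then vm * A else vm * B))))"

definition eigenvalues :: "real^'n^'n \<Rightarrow> complex set" where
  "eigenvalues M = {z. det ((\<chi> i j. complex_of_real (M $ i $ j)) - mat z) = 0}"

definition max_re_eig :: "real^'n^'n \<Rightarrow> real" where
  "max_re_eig M = Max (Re ` eigenvalues M)"

definition is_critical :: "real \<Rightarrow> real \<Rightarrow> real \<Rightarrow> real \<Rightarrow> real \<Rightarrow> int \<Rightarrow> real \<Rightarrow> bool" where
  "is_critical \<mu> \<sigma> vn vm \<rho> k t \<longleftrightarrow> t > 0 \<and>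
     (\<forall>\<tau>. 0 < \<tau> \<and> \<tau> < t \<longrightarrow> max_re_eig (cp_M \<mu> \<sigma> vn vm \<rho> k \<tau>) > 0) \<and>
     max_re_eig (cp_M \<mu> \<sigma> vn vm \<rho> k t) = 0 \<and>
     (\<forall>\<tau>. \<tau> > t \<longrightarrow> max_re_eig (cp_M \<mu> \<sigma> vn vm \<rho> k \<tau>) < 0)"

end

theory Submission
  imports Defs
begin

definition gZ :: "int \<Rightarrow> real \<Rightarrow> real" where
  "gZ k x = x\<^sup>2 * (1 - ((-1::real) powi k) * exp (- x * pi)) / (((real_of_int k)\<^sup>2 + x\<^sup>2) * (1 - exp (- x * pi)))"

lemma sgn_powi: "\<bar>(-1::real) powi k\<bar> = 1"
  by (simp add: power_int_abs)

lemma powi_plus2: "(-1::real) powi (k + 2) = (-1) powi k"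
  by (simp add: power_int_add)

lemma powi_minus2: "(-1::real) powi (k - 2) = (-1) powi k"
  by (simp add: power_int_diff)

lemma cpZ_gZ: "cp_Z \<sigma> \<rho> k \<tau> = gZ k (cp_alpha \<sigma> \<tau> * \<rho>)"
  unfolding cp_Z_def gZ_def Let_def by (simp add: power_mult_distrib mult.assoc)

lemma exp_q: assumes "x > 0" shows "exp (- x * pi) < 1" "exp (- x * pi) > 0"
  using assms by (auto simp: pi_gt_zero)

lemma num_pos: assumes "x > 0" shows "1 - ((-1::real) powi k) * exp (- x * pi) > 0"
proof -
  have "((-1::real) powi k) * exp (- x * pi) \<le> \<bar>((-1::real) powi k) * exp (- x * pi)\<bar>" by simp
  also have "... = exp (- x * pi)" by (simp add: abs_mult sgn_powi)
  finally show ?thesis using exp_q[OF assms] by linarith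
qed

lemma gZ_pos: assumes "x > 0" shows "gZ k x > 0"
  unfolding gZ_def using num_pos[OF assms, of k] exp_q[OF assms] assms
  by (intro divide_pos_pos mult_pos_pos) (auto simp: add_nonneg_pos)

lemma gZ_mono: assumes "x > 0" "(real_of_int k)\<^sup>2 < (real_of_int j)\<^sup>2" "(-1::real) powi j = (-1) powi k"
  shows "gZ j x < gZ k x"
proof -
  define N where "N = x\<^sup>2 * (1 - ((-1::real) powi k) * exp (- x * pi))"
  define E where "E = 1 - exp (- x * pi)"
  have N: "N > 0" unfolding N_def using num_pos[OF assms(1), of k] assms(1) by simp
  have E: "E > 0" unfolding E_def using exp_q[OF assms(1)] by simp
  have "gZ j x = N / (((real_of_int j)\<^sup>2 + x\<^sup>2) * E)" unfolding gZ_def N_def E_def assms(3) ..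
  moreover have "gZ k x = N / (((real_of_int k)\<^sup>2 + x\<^sup>2) * E)" unfolding gZ_def N_def E_def ..
  moreover have "((real_of_int k)\<^sup>2 + x\<^sup>2) * E < ((real_of_int j)\<^sup>2 + x\<^sup>2) * E"
    using E assms(2) by simp
  moreover have "((real_of_int k)\<^sup>2 + x\<^sup>2) * E > 0" using E assms(1) by (simp add: add_nonneg_pos)
  ultimately show ?thesis using N by (simp add: divide_strict_left_mono)
qed

lemma gZ_cont: assumes "x > 0" shows "isCont (gZ k) x"
proof -
  have "(real_of_int k)\<^sup>2 + x\<^sup>2 > 0" using assms by (simp add: add_nonneg_pos)
  moreover have "1 - exp (- x * pi) \<noteq> 0" using exp_q(1)[OF assms] by linarith
  ultimately show ?thesis unfolding gZ_def[abs_def]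
    using assms by (intro continuous_intros) auto
qed

lemma gZ_bound: assumes "x > 0" "x \<le> 1" "k \<noteq> 0" shows "gZ k x \<le> 3 * x"
proof -
  define q where "q = exp (- x * pi)"
  have q0: "q > 0" "q < 1" unfolding q_def using exp_q[OF assms(1)] by auto
  have xp: "x * pi > 0" using assms by simp
  have "exp (x * pi) \<ge> 1 + x * pi" by (rule exp_ge_add_one_self)
  moreover have "q * exp (x * pi) = 1" unfolding q_def by (simp add: exp_minus[symmetric] exp_add[symmetric])
  ultimately have q1: "q * (1 + x * pi) \<le> 1" using q0 by (metis mult_left_mono less_imp_le)
  have Eb: "1 - q \<ge> x * pi / (1 + x * pi)" using q1 xp by (simp add: field_simps)
  have nb: "1 - ((-1::real) powi k) * q \<le> 2"
  proof -
    have "- (((-1::real) powi k) * q) \<le> \<bar>((-1::real) powi k) * q\<bar>" by simp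
    also have "... = q" using q0 by (simp add: abs_mult sgn_powi)
    finally show ?thesis using q0 by linarith
  qed
  have k1: "(real_of_int k)\<^sup>2 \<ge> 1" using assms(3)
    by (metis of_int_1_le_iff of_int_power one_le_power zero_less_abs_iff int_one_le_iff_zero_less power2_abs)
  have "gZ k x = x\<^sup>2 * (1 - ((-1::real) powi k) * q) / (((real_of_int k)\<^sup>2 + x\<^sup>2) * (1 - q))"
    unfolding gZ_def q_def ..
  also have "... \<le> x\<^sup>2 * 2 / (1 * (x * pi / (1 + x * pi)))"
  proof (rule frac_le)
    show "0 \<le> x\<^sup>2 * 2" by simp
    show "x\<^sup>2 * (1 - (- 1) powi k * q) \<le> x\<^sup>2 * 2" using nb by (simp add: mult_left_mono)
    show "0 < 1 * (x * pi / (1 + x * pi))" using xp by simp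
    show "1 * (x * pi / (1 + x * pi)) \<le> ((real_of_int k)\<^sup>2 + x\<^sup>2) * (1 - q)"
      using Eb k1 q0 xp by (intro mult_mono) (auto simp: add_increasing2)
  qed
  also have "... = 2 * x * (1 + x * pi) / pi" using assms(1) by (simp add: field_simps power2_eq_square)
  also have "... \<le> 3 * x"
  proof -
    have "x * pi \<le> pi" using assms(1,2) pi_gt_zero mult_left_le_one_le[of pi x] by simp
    hence h: "2 * (1 + x * pi) \<le> 3 * pi" using pi_gt3 by (smt (verit))
    have "x * (2 * (1 + x * pi)) \<le> x * (3 * pi)" using mult_left_mono[OF h] assms(1) by simp
    hence "2 * x * (1 + x * pi) \<le> 3 * x * pi" by (simp add: algebra_simps)
    thus ?thesis by (simp add: field_simps)
  qed
  finally show ?thesis .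
qed
lemma eig2:
  fixes M :: "real^2^2"
  shows "eigenvalues M = {z. z^2 - complex_of_real (M$1$1 + M$2$2) * z + complex_of_real (M$1$1*M$2$2 - M$1$2*M$2$1) = 0}"
  unfolding eigenvalues_def
  apply (simp add: det_2 mat_def)
  apply (rule Collect_cong)
  apply (simp add: algebra_simps power2_eq_square)
  done
lemma quad_root_gen:
  fixes t d c :: complex
  assumes h: "c * c = t * t - 4 * d"
  shows "((t + c) / 2)^2 - t * ((t + c) / 2) + d = 0"
proof -
  have "((t + c) / 2)^2 - t * ((t + c) / 2) + d = (c * c - (t * t - 4 * d)) / 4"
    by (simp add: field_simps power2_eq_square)
  thus ?thesis using h by simp
qed

lemma quad_root:
  fixes T D :: real
  defines "z \<equiv> (complex_of_real T + csqrt (complex_of_real (T^2 - 4*D))) / 2"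
  shows "z^2 - complex_of_real T * z + complex_of_real D = 0"
  unfolding z_def
  by (rule quad_root_gen) (metis power2_csqrt power2_eq_square of_real_mult of_real_diff of_real_numeral)

lemma quad_set_finite:
  fixes T D :: real
  shows "finite {z::complex. z^2 - complex_of_real T * z + complex_of_real D = 0}"
proof -
  define z where "z = (complex_of_real T + csqrt (complex_of_real (T^2 - 4*D))) / 2"
  have hz: "z^2 - complex_of_real T * z + complex_of_real D = 0" unfolding z_def by (rule quad_root)
  have "{w::complex. w^2 - complex_of_real T * w + complex_of_real D = 0} \<subseteq> {z, complex_of_real T - z}"
  proof
    fix w assume "w \<in> {w::complex. w^2 - complex_of_real T * w + complex_of_real D = 0}"
    hence hw: "w^2 - complex_of_real T * w + complex_of_real D = 0" by simp
    have "(w - z) * (w - (complex_of_real T - z)) = 0"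
      proof -
      have "(w - z) * (w - (complex_of_real T - z)) = (w^2 - complex_of_real T * w + complex_of_real D) - (z^2 - complex_of_real T * z + complex_of_real D)"
        by (simp add: algebra_simps power2_eq_square)
      thus ?thesis using hw hz by simp
    qed
    thus "w \<in> {z, complex_of_real T - z}" by auto
  qed
  thus ?thesis by (rule finite_subset) simp
qed

lemma quad_max_pos:
  fixes T D :: real
  shows "Max (Re ` {z::complex. z^2 - complex_of_real T * z + complex_of_real D = 0}) > 0
         \<longleftrightarrow> (D < 0 \<or> T > 0)"
proof -
  let ?S = "{z::complex. z^2 - complex_of_real T * z + complex_of_real D = 0}"
  define z where "z = (complex_of_real T + csqrt (complex_of_real (T^2 - 4*D))) / 2"
  have hz: "z \<in> ?S" unfolding z_def using quad_root by simp
  have fin: "finite (Re ` ?S)" using quad_set_finite by simp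
  have ne: "Re ` ?S \<noteq> {}" using hz by auto
  show ?thesis
  proof
    assume "Max (Re ` ?S) > 0"
    moreover have "Max (Re ` ?S) \<in> Re ` ?S" using fin ne by (rule Max_in)
    ultimately obtain w where w: "w \<in> ?S" "Re w > 0" by auto
    show "D < 0 \<or> T > 0"
    proof (rule ccontr)
      assume "\<not> (D < 0 \<or> T > 0)"
      hence D0: "D \<ge> 0" and T0: "T \<le> 0" by auto
      have eq: "w^2 - complex_of_real T * w + complex_of_real D = 0" using w by simp
      have re: "Re w ^2 - Im w ^2 - T * Re w + D = 0"
        using arg_cong[OF eq, of Re] by (simp add: power2_eq_square)
      have im: "Im w * (2 * Re w - T) = 0"
        using arg_cong[OF eq, of Im] by (simp add: power2_eq_square algebra_simps)
      show False
      proof (cases "Im w = 0")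
        case True
        have "Re w ^2 > 0" using w by simp
        moreover have "T * Re w \<le> 0" using T0 w by (simp add: mult_nonpos_nonneg)
        moreover have "(Im w)^2 = 0" using True by simp
        ultimately show False using re D0 by linarith
      next
        case False
        hence "2 * Re w - T = 0" using im by simp
        thus False using T0 w by linarith
      qed
    qed
  next
    assume H: "D < 0 \<or> T > 0"
    have "Re z > 0"
    proof (cases "T > 0")
      case True
      define c where "c = csqrt (complex_of_real (T^2 - 4*D))"
      have c0: "Re c \<ge> 0" unfolding c_def by (rule Re_csqrt)
      have zc: "z = (complex_of_real T + c) / 2" unfolding z_def c_def ..
      have "Re z = (T + Re c) / 2" unfolding zc by simp
      thus ?thesis using True c0 by simp
    next
      case False
      hence D: "D < 0" using H by simp
      have nn: "T^2 - 4*D \<ge> 0" using D by (smt (verit) zero_le_power2)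
      have c: "csqrt (complex_of_real (T^2 - 4*D)) = complex_of_real (sqrt (T^2 - 4*D))"
        by (rule of_real_sqrt[OF nn, symmetric])
      have zc: "z = complex_of_real ((T + sqrt (T^2 - 4*D)) / 2)"
        unfolding z_def c by (simp add: field_simps)
      have "sqrt (T^2 - 4*D) > sqrt (T^2)"
        using D by (simp only: real_sqrt_less_iff)
      moreover have "sqrt (T^2) = \<bar>T\<bar>" by simp
      ultimately show ?thesis unfolding zc by simp
    qed
    moreover have "Re z \<le> Max (Re ` ?S)" using fin hz by (simp add: Max_ge)
    ultimately show "Max (Re ` ?S) > 0" by linarith
  qed
qed

definition unst :: "real \<Rightarrow> real \<Rightarrow> real \<Rightarrow> real \<Rightarrow> real \<Rightarrow> bool" where
  "unst \<mu> \<sigma> vn vm Z \<longleftrightarrow> (- (vn * vm * \<mu> * (cp_A \<mu> \<sigma> Z + cp_B \<mu> \<sigma> Z)) < 0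
      \<or> vn * \<mu> * (cp_A \<mu> \<sigma> Z / \<sigma> - 1) + vm * cp_B \<mu> \<sigma> Z > 0)"

lemma Gbar_pos: assumes "\<sigma> > 1" "\<rho> > 0" "\<tau> > 0" shows "cp_Gbar \<sigma> \<rho> \<tau> > 0"
proof -
  have a: "cp_alpha \<sigma> \<tau> > 0" unfolding cp_alpha_def using assms by simp
  have "exp (- cp_alpha \<sigma> \<tau> * pi * \<rho>) < 1" using a assms by (simp add: pi_gt_zero)
  hence "\<sigma> / (2 * pi * \<rho>) * (2 * (1 - exp (- cp_alpha \<sigma> \<tau> * pi * \<rho>)) / cp_alpha \<sigma> \<tau>) > 0"
    using a assms by (intro mult_pos_pos divide_pos_pos) auto
  thus ?thesis unfolding cp_Gbar_def Let_def by (simp only: powr_gt_zero)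
qed

lemma cpM_unst:
  assumes "\<sigma> > 1" "\<rho> > 0" "\<tau> > 0"
  shows "max_re_eig (cp_M \<mu> \<sigma> vn vm \<rho> k \<tau>) > 0 \<longleftrightarrow> unst \<mu> \<sigma> vn vm (cp_Z \<sigma> \<rho> k \<tau>)"
proof -
  define Z where "Z = cp_Z \<sigma> \<rho> k \<tau>"
  define A where "A = cp_A \<mu> \<sigma> Z"
  define B where "B = cp_B \<mu> \<sigma> Z"
  define c where "c = (cp_Gbar \<sigma> \<rho> \<tau>) powr (- \<mu>) / \<sigma>"
  have c: "c > 0" unfolding c_def using Gbar_pos[OF assms] assms by simp
  define M where "M = cp_M \<mu> \<sigma> vn vm \<rho> k \<tau>"
  have M11: "M$1$1 = c * (vn * \<mu> * (A / \<sigma> - 1))"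
    and M12: "M$1$2 = c * (vn * \<mu> * (B / \<sigma> + 1))"
    and M21: "M$2$1 = c * (vm * A)"
    and M22: "M$2$2 = c * (vm * B)"
    unfolding M_def cp_M_def Let_def A_def B_def Z_def c_def by simp_all
  have T: "M$1$1 + M$2$2 = c * (vn * \<mu> * (A / \<sigma> - 1) + vm * B)"
    unfolding M11 M22 by (simp add: algebra_simps)
  have D: "M$1$1 * M$2$2 - M$1$2 * M$2$1 = c^2 * (- (vn * vm * \<mu> * (A + B)))"
    unfolding M11 M12 M21 M22 by (simp add: algebra_simps power2_eq_square)
  have "max_re_eig M > 0 \<longleftrightarrow> (M$1$1 * M$2$2 - M$1$2 * M$2$1 < 0 \<or> M$1$1 + M$2$2 > 0)"
    unfolding max_re_eig_def eig2 by (rule quad_max_pos)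
  also have "... \<longleftrightarrow> unst \<mu> \<sigma> vn vm Z"
    unfolding T D unst_def A_def[symmetric] B_def[symmetric] using c
    by (simp add: mult_less_0_iff zero_less_mult_iff)
  finally show ?thesis unfolding M_def Z_def .
qed
lemma crit_lt:
  assumes s: "\<sigma> > 1" and r: "\<rho> > 0" and k0: "k \<noteq> 0"
    and kj: "(real_of_int k)\<^sup>2 < (real_of_int j)\<^sup>2" and pj: "(-1::real) powi j = (-1) powi k"
    and ck: "is_critical \<mu> \<sigma> vn vm \<rho> k t" and cj: "is_critical \<mu> \<sigma> vn vm \<rho> j t'"
  shows "t < t'"
proof -
  define a where "a = (\<sigma> - 1) * \<rho>"
  have a: "a > 0" unfolding a_def using s r by simp
  have t0: "t > 0" using ck unfolding is_critical_def by simp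
  have xa: "cp_alpha \<sigma> \<tau> * \<rho> = a * \<tau>" for \<tau> unfolding cp_alpha_def a_def by simp
  define xt where "xt = a * t"
  have xt: "xt > 0" unfolding xt_def using a t0 by simp
  define Zp where "Zp = gZ j xt"
  have Zp0: "Zp > 0" unfolding Zp_def using gZ_pos[OF xt] .
  have Zps: "Zp < gZ k xt" unfolding Zp_def by (rule gZ_mono[OF xt kj pj])
  define x1 where "x1 = min (xt/2) (min 1 (Zp/4))"
  have x1: "x1 > 0" "x1 \<le> 1" "x1 < xt" "x1 \<le> Zp/4" unfolding x1_def using xt Zp0 by auto
  have "gZ k x1 \<le> 3 * x1" by (rule gZ_bound[OF x1(1) x1(2) k0])
  hence g1: "gZ k x1 \<le> Zp" using x1(4) Zp0 by linarith
  have "\<exists>x\<ge>x1. x \<le> xt \<and> gZ k x = Zp"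
    using g1 Zps x1 by (intro IVT) (auto intro!: gZ_cont)
  then obtain x0 where x0: "x0 \<ge> x1" "x0 \<le> xt" "gZ k x0 = Zp" by blast
  have "x0 \<noteq> xt" using x0(3) Zps by auto
  hence x0t: "x0 < xt" using x0(2) by simp
  define \<tau>0 where "\<tau>0 = x0 / a"
  have \<tau>0: "0 < \<tau>0" "\<tau>0 < t" unfolding \<tau>0_def using a x0(1) x1(1) x0t xt_def
    by (auto simp: field_simps)
  have "max_re_eig (cp_M \<mu> \<sigma> vn vm \<rho> k \<tau>0) > 0" using ck \<tau>0 unfolding is_critical_def by blast
  hence "unst \<mu> \<sigma> vn vm (cp_Z \<sigma> \<rho> k \<tau>0)" using cpM_unst[OF s r \<tau>0(1)] by blast
  moreover have "cp_Z \<sigma> \<rho> k \<tau>0 = Zp" unfolding cpZ_gZ xa \<tau>0_def using a x0(3) by simp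
  ultimately have "unst \<mu> \<sigma> vn vm (cp_Z \<sigma> \<rho> j t)" unfolding cpZ_gZ xa Zp_def xt_def by simp
  hence pos: "max_re_eig (cp_M \<mu> \<sigma> vn vm \<rho> j t) > 0" using cpM_unst[OF s r t0] by blast
  show "t < t'"
  proof (rule ccontr)
    assume "\<not> t < t'"
    hence "t = t' \<or> t > t'" by auto
    thus False using cj pos unfolding is_critical_def by force
  qed
qed
theorem theorem1:
  fixes \<mu> \<sigma> vn vm \<rho> :: real
  assumes "0 < \<mu>" "\<mu> < 1" "\<sigma> > 1" "1 / (1 - \<mu>) < \<sigma>"
    and "vn > 0" "vm > 0" "\<rho> > 0"
  shows "(\<forall>(k::int) t t'. k > 0 \<longrightarrow> is_critical \<mu> \<sigma> vn vm \<rho> k t \<longrightarrow>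
            is_critical \<mu> \<sigma> vn vm \<rho> (k + 2) t' \<longrightarrow> t < t')
      \<and> (\<forall>(k::int) t t'. k < 0 \<longrightarrow> is_critical \<mu> \<sigma> vn vm \<rho> k t \<longrightarrow>
            is_critical \<mu> \<sigma> vn vm \<rho> (k - 2) t' \<longrightarrow> t < t')"
proof (intro conjI allI impI)
  fix k :: int and t t'
  assume k: "k > 0" and c1: "is_critical \<mu> \<sigma> vn vm \<rho> k t" and c2: "is_critical \<mu> \<sigma> vn vm \<rho> (k + 2) t'"
  have "(real_of_int k)\<^sup>2 < (real_of_int (k + 2))\<^sup>2"
    using k by (simp add: power2_eq_square algebra_simps)
  thus "t < t'" using crit_lt[OF assms(3) assms(7) _ _ powi_plus2 c1 c2] k by simp
next
  fix k :: int and t t'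
  assume k: "k < 0" and c1: "is_critical \<mu> \<sigma> vn vm \<rho> k t" and c2: "is_critical \<mu> \<sigma> vn vm \<rho> (k - 2) t'"
  have "(real_of_int k)\<^sup>2 < (real_of_int (k - 2))\<^sup>2"
    using k by (simp add: power2_eq_square algebra_simps)
  thus "t < t'" using crit_lt[OF assms(3) assms(7) _ _ powi_minus2 c1 c2] k by simp
qed

end
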